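(* $|\mathrm{GHZ}\rangle^{\otimes 3}\stackrel{\textrm{SLOCC}}{\longrightarrow}|W\rangle^{\otimes 2}$, where $|\mathrm{GHZ}\rangle=\frac{1}{\sqrt2}(|000\rangle+|111\rangle)$ and $|W\rangle=\frac{1}{\sqrt3}(|001\rangle+|010\rangle+|100\rangle)$ are three-qubit states shared by parties $A,B,C$ (in each ket the first qubit belongs to $A$, the second to $B$, the third to $C$), and tensor powers are taken with each party holding its own qubits from all copies.
   Context: For tripartite states, $|\psi\rangle\stackrel{\textrm{SLOCC}}{\longrightarrow}|\phi\rangle$ means that $|\psi\rangle$ can be transformed into $|\phi\rangle$ with nonzero success probability by local operations of the three parties and classical communication; equivalently, there exist linear operators $A,B,C$ on the respective parties' spaces with $(A\otimes B\otimes C)|\psi\rangle=|\phi\rangle$ up to a nonzero scalar. *)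

theory Defs
  imports Complex_Main
begin

text \<open>A tripartite pure state with local dimensions dA, dB, dC is represented by
its coefficient tensor  psi a b c  (for a < dA, b < dB, c < dC) in the
computational basis; coefficients outside the index range are irrelevant.\<close>

type_synonym tri_state = "nat \<Rightarrow> nat \<Rightarrow> nat \<Rightarrow> complex"

text \<open>A local linear operator from C^d to C^d' is a matrix  M i a  (i < d', a < d).
SLOCC convertibility: there are operators A, B, C and a nonzero scalar s with
(A \<otimes> B \<otimes> C) psi = s * phi.\<close>

definition slocc ::
  "nat \<Rightarrow> nat \<Rightarrow> nat \<Rightarrow> tri_state \<Rightarrow> nat \<Rightarrow> nat \<Rightarrow> nat \<Rightarrow> tri_state \<Rightarrow> bool" where
  "slocc dA dB dC psi dA' dB' dC' phi \<longleftrightarrow>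
     (\<exists>(A::nat \<Rightarrow> nat \<Rightarrow> complex) (B::nat \<Rightarrow> nat \<Rightarrow> complex) (C::nat \<Rightarrow> nat \<Rightarrow> complex) (s::complex).
        s \<noteq> 0 \<and>
        (\<forall>i<dA'. \<forall>j<dB'. \<forall>k<dC'.
           (\<Sum>a<dA. \<Sum>b<dB. \<Sum>c<dC. A i a * B j b * C k c * psi a b c) = s * phi i j k))"

definition ghz :: tri_state where
  "ghz a b c = (if (a, b, c) = (0, 0, 0) \<or> (a, b, c) = (1, 1, 1)
                then complex_of_real (1 / sqrt 2) else 0)"

definition wst :: tri_state where
  "wst a b c = (if (a, b, c) = (0, 0, 1) \<or> (a, b, c) = (0, 1, 0) \<or> (a, b, c) = (1, 0, 0)
                then complex_of_real (1 / sqrt 3) else 0)"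

text \<open>n-fold tensor power of a three-qubit state, each party holding its n qubits;
party index x < 2^n encodes the party's qubit of copy k as bit k of x.\<close>

definition qbit :: "nat \<Rightarrow> nat \<Rightarrow> nat" where
  "qbit k x = x div 2 ^ k mod 2"

definition tpow :: "nat \<Rightarrow> tri_state \<Rightarrow> tri_state" where
  "tpow n psi a b c = (\<Prod>k<n. psi (qbit k a) (qbit k b) (qbit k c))"

end

theory Submission
  imports Defs
begin

definition Xm :: "nat \<Rightarrow> nat \<Rightarrow> complex" where
  "Xm i r = (if (r = 0 \<and> i = 0) \<or> (r = 1 \<and> (i = 0 \<or> i = 1)) \<or> (r = 2 \<and> (i = 0 \<or> i = 2))
     \<or> (r = 3 \<and> i = 1) \<or> (r = 4 \<and> i = 2) \<or> (r = 5 \<and> (i = 1 \<or> i = 2))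
     \<or> (r = 6 \<and> (i = 0 \<or> i = 3)) \<or> (r = 7 \<and> i = 3) then 1 else 0)"

definition Zm :: "nat \<Rightarrow> nat \<Rightarrow> complex" where
  "Zm k r = (if r = 0 then (if k = 3 then 1 else -1)
     else if r = 1 then (if k = 2 then 1 else 0)
     else if r = 2 then (if k = 1 then 1 else 0)
     else if r = 3 then (if k = 0 \<or> k = 2 then -1 else 0)
     else if r = 4 then (if k = 0 \<or> k = 1 then -1 else 0)
     else if r = 5 \<or> r = 6 then (if k = 0 then 1 else 0)
     else if r = 7 then (if k = 0 then -1 else 0) else 0)"

lemma ghz_bits: "x < 2 \<Longrightarrow> y < 2 \<Longrightarrow> z < 2 \<Longrightarrow>
   ghz x y z = (if x = y \<and> y = z then complex_of_real (1 / sqrt 2) else 0)"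
  by (auto simp: ghz_def less_2_cases_iff)

lemma qbit_lt: "qbit k x < 2" by (simp add: qbit_def)

lemma dec: "(a::nat) < 8 \<Longrightarrow> a = qbit 0 a + 2 * qbit 1 a + 4 * qbit 2 a"
proof -
  assume "a < 8"
  then have 4: "a div 4 mod 2 = a div 4" by simp
  have e1: "a = a mod 2 + 2 * (a div 2)" by simp
  have e2: "a div 2 = a div 2 mod 2 + 2 * (a div 4)"
  proof -
    have "a div 2 div 2 = a div 4" by (simp add: div_mult2_eq)
    moreover have "a div 2 = a div 2 mod 2 + 2 * (a div 2 div 2)" by simp
    ultimately show ?thesis by simp
  qed
  have "qbit 0 a = a mod 2" "qbit 1 a = a div 2 mod 2" "qbit 2 a = a div 4"
    by (simp_all add: qbit_def 4)
  then show ?thesis using e1 e2 by linarith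
qed

lemma bits_eq: "(a::nat) < 8 \<Longrightarrow> b < 8 \<Longrightarrow> (\<forall>k<3. qbit k a = qbit k b) \<longleftrightarrow> a = b"
proof
  assume a: "a < 8" and b: "b < 8" and h: "\<forall>k<3. qbit k a = qbit k b"
  have "qbit 0 a = qbit 0 b" "qbit 1 a = qbit 1 b" "qbit 2 a = qbit 2 b" using h by auto
  then show "a = b" using dec[OF a] dec[OF b] by simp
qed simp

lemma tpow_ghz: assumes "a < 8" "b < 8" "c < 8"
  shows "tpow 3 ghz a b c = (if a = b \<and> b = c then complex_of_real (1 / sqrt 2) ^ 3 else 0)"
proof -
  have "tpow 3 ghz a b c = (\<Prod>k<3. if qbit k a = qbit k b \<and> qbit k b = qbit k c
        then complex_of_real (1 / sqrt 2) else 0)"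
    unfolding tpow_def by (intro prod.cong refl ghz_bits qbit_lt)
  also have "\<dots> = (if (\<forall>k<3. qbit k a = qbit k b) \<and> (\<forall>k<3. qbit k b = qbit k c)
        then complex_of_real (1 / sqrt 2) ^ 3 else 0)"
    by (auto simp: numeral_3_eq_3 lessThan_Suc less_Suc_eq)
  also have "\<dots> = (if a = b \<and> b = c then complex_of_real (1 / sqrt 2) ^ 3 else 0)"
    using bits_eq[of a b] bits_eq[of b c] assms by simp
  finally show ?thesis .
qed

lemma red: "(\<Sum>a<(2::nat)^3. \<Sum>b<(2::nat)^3. \<Sum>c<(2::nat)^3. A i a * B j b * C k c * tpow 3 ghz a b c)
   = complex_of_real (1 / sqrt 2) ^ 3 * (\<Sum>a<8. A i a * B j a * C k a)"
proof -
  let ?h = "complex_of_real (1 / sqrt 2) ^ 3"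
  have "(\<Sum>a<(2::nat)^3. \<Sum>b<(2::nat)^3. \<Sum>c<(2::nat)^3. A i a * B j b * C k c * tpow 3 ghz a b c)
     = (\<Sum>a<8. \<Sum>b<8. if b = a then (\<Sum>c<8. if c = a then A i a * B j a * C k c * ?h else 0) else 0)"
  proof (intro sum.cong refl)
    fix a b assume a: "a \<in> {..<(8::nat)}" and b: "b \<in> {..<(8::nat)}"
    show "(\<Sum>c<(2::nat)^3. A i a * B j b * C k c * tpow 3 ghz a b c) =
      (if b = a then (\<Sum>c<8. if c = a then A i a * B j a * C k c * ?h else 0) else 0)"
    proof (cases "b = a")
      case True
      have "(\<Sum>c<(2::nat)^3. A i a * B j b * C k c * tpow 3 ghz a b c) =
        (\<Sum>c<8. if c = a then A i a * B j a * C k c * ?h else 0)"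
        by (rule sum.cong) (use a b True in \<open>auto simp: tpow_ghz\<close>)
      then show ?thesis using True by simp
    next
      case False
      then show ?thesis using a b by (auto simp: tpow_ghz intro!: sum.neutral)
    qed
  qed (simp_all add: eval_nat_numeral)
  also have "\<dots> = (\<Sum>a<8. A i a * B j a * C k a * ?h)"
    by (intro sum.cong refl) simp
  finally show ?thesis by (simp add: sum_distrib_left mult.commute mult.left_commute)
qed

lemma L8: "{..<8::nat} = {0,1,2,3,4,5,6,7}" by auto

lemma sum8: "(\<Sum>r<(8::nat). f r) = f 0 + f 1 + f 2 + f 3 + f 4 + f 5 + f 6 + (f 7 :: complex)"
  unfolding L8 by (simp add: ac_simps)

lemma tw: "tpow 2 wst i j k = wst (i mod 2) (j mod 2) (k mod 2) * wst (i div 2 mod 2) (j div 2 mod 2) (k div 2 mod 2)"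
  by (simp add: tpow_def qbit_def numeral_2_eq_2 lessThan_Suc)

lemma w3: "complex_of_real (1 / sqrt 3) * complex_of_real (1 / sqrt 3) = 1/3"
  by (simp flip: of_real_mult)

lemma w3': "complex_of_real (sqrt 3) * complex_of_real (sqrt 3) = 3"
  by (simp flip: of_real_mult)

lemma main: "i < 4 \<Longrightarrow> j < 4 \<Longrightarrow> k < 4 \<Longrightarrow>
  (\<Sum>r<8. Xm i r * Xm j r * Zm k r) = 3 * tpow 2 wst i j k"
proof -
  assume "i < 4" "j < 4" "k < 4"
  then have "i \<in> {0,1,2,3}" "j \<in> {0,1,2,3}" "k \<in> {0,1,2,3}" by auto
  then show ?thesis
    unfolding sum8 tw
    by (auto simp only: insert_iff empty_iff) (simp_all add: Xm_def Zm_def wst_def w3 w3')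
qed

theorem theorem1:
  shows "slocc (2^3) (2^3) (2^3) (tpow 3 ghz) (2^2) (2^2) (2^2) (tpow 2 wst)"
  unfolding slocc_def
proof (intro exI conjI allI impI)
  let ?h = "complex_of_real (1 / sqrt 2) ^ 3"
  show "?h * 3 \<noteq> 0" by simp
  fix i j k :: nat assume "i < 2^2" "j < 2^2" "k < 2^2"
  then show "(\<Sum>a<2^3. \<Sum>b<2^3. \<Sum>c<2^3. Xm i a * Xm j b * Zm k c * tpow 3 ghz a b c)
        = ?h * 3 * tpow 2 wst i j k"
    unfolding red using main[of i j k] by (simp add: mult.assoc)
qed

end
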